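(* Let $J\subseteq\Delta^r_n$ be an M-convex set and let $\rho\colon\Delta^r_n\to\mathbb R_{\ge0}$ be a function whose support $\{\alpha:\rho(\alpha)\ne0\}$ equals $J$. Define $f\colon\mathbb Z^n\to\mathbb R\cup\{\infty\}$ by $f(\alpha)=-\log\rho(\alpha)$ for $\alpha\in\Delta^r_n$ (with $-\log 0=\infty$) and $f(\alpha)=\infty$ for $\alpha\notin\Delta^r_n$. Then $\rho$ is a $\mathbb T_0$-representation of $J$ if and only if $f$ is an M-convex function.
   Context: $\Delta^r_n=\{\alpha\in\mathbb N^n:\sum_i\alpha_i=r\}$, $\epsilon_i$ the standard basis vectors, $\le$ componentwise. A nonempty $J\subseteq\Delta^r_n$ is M-convex if for all $\alpha,\beta\in J$ and $i$ with $\alpha_i<\beta_i$ there is $j$ with $\alpha_j>\beta_j$ and $\alpha+\epsilon_i-\epsilon_j,\ \beta-\epsilon_i+\epsilon_j\in J$. $\delta^-_J,\delta^+_J$ denote the componentwise minimum and maximum of the elements of $J$. The tropical hyperfield $\mathbb T_0$ is $\mathbb R_{\ge0}$ with its multiplication, in which $-1=1$, and where a formal sum of elements is null iff either all terms are $0$ or the maximum of the terms is attained by at least two terms. A $\mathbb T_0$-representation of $J$ is a function $\rho\colon\Delta^r_n\to\mathbb R_{\ge0}$ with support $J$ such that for all $2\le s\le r$, all $\alpha\in\Delta^{r-s}_n$ with $\delta^-_J\le\alpha$, and all $i_0,\dots,i_s,j_2,\dots,j_s\in[n]$ with $\alpha+\epsilon_{i_0}+\dots+\epsilon_{i_s}+\epsilon_{j_2}+\dots+\epsilon_{j_s}\le\delta^+_J$,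 the formal sum $\sum_{k=0}^s\rho(\alpha-\epsilon_{i_k}+\epsilon_{i_0}+\dots+\epsilon_{i_s})\cdot\rho(\alpha+\epsilon_{i_k}+\epsilon_{j_2}+\dots+\epsilon_{j_s})$ is null in $\mathbb T_0$. A function $f\colon\mathbb Z^n\to\mathbb R\cup\{\infty\}$ is M-convex (in Murota's sense) if its support $\{\alpha:f(\alpha)\ne\infty\}$ is nonempty and for all $\alpha,\beta$ in the support and every $k$ with $\alpha_k>\beta_k$ there is $l$ with $\alpha_l<\beta_l$ and $f(\alpha)+f(\beta)\ge f(\alpha-\epsilon_k+\epsilon_l)+f(\beta+\epsilon_k-\epsilon_l)$. *)

theory Defs
  imports Complex_Main "HOL-Library.Extended_Real" "HOL-Library.Function_Algebras"
begin

text \<open>Integer vectors in Z^n are modelled as functions nat => int vanishing at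
  every coordinate i >= n; coordinates are indexed 0..n-1.\<close>

definition Zn :: "nat \<Rightarrow> (nat \<Rightarrow> int) set" where
  "Zn n = {\<alpha>. \<forall>i\<ge>n. \<alpha> i = 0}"

definition simplex :: "nat \<Rightarrow> nat \<Rightarrow> (nat \<Rightarrow> int) set" where
  "simplex n r = {\<alpha>. (\<forall>i. 0 \<le> \<alpha> i) \<and> (\<forall>i\<ge>n. \<alpha> i = 0) \<and> (\<Sum>i<n. \<alpha> i) = int r}"

definition ev :: "nat \<Rightarrow> nat \<Rightarrow> int" where
  "ev i = (\<lambda>j. if j = i then 1 else 0)"

definition M_convex_set :: "nat \<Rightarrow> (nat \<Rightarrow> int) set \<Rightarrow> bool" where
  "M_convex_set n J \<longleftrightarrow> J \<noteq> {} \<and>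
     (\<forall>\<alpha>\<in>J. \<forall>\<beta>\<in>J. \<forall>i<n. \<alpha> i < \<beta> i \<longrightarrow>
        (\<exists>j<n. \<alpha> j > \<beta> j \<and> \<alpha> + ev i - ev j \<in> J \<and> \<beta> - ev i + ev j \<in> J))"

definition delta_minus :: "(nat \<Rightarrow> int) set \<Rightarrow> nat \<Rightarrow> int" where
  "delta_minus J = (\<lambda>i. Min ((\<lambda>\<alpha>. \<alpha> i) ` J))"

definition delta_plus :: "(nat \<Rightarrow> int) set \<Rightarrow> nat \<Rightarrow> int" where
  "delta_plus J = (\<lambda>i. Max ((\<lambda>\<alpha>. \<alpha> i) ` J))"

text \<open>Nullity of a formal sum of terms t k (k in K) in the tropical hyperfield T_0:
  either all terms are 0, or the maximum is attained by at least two terms.\<close>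

definition T0_null :: "nat set \<Rightarrow> (nat \<Rightarrow> real) \<Rightarrow> bool" where
  "T0_null K t \<longleftrightarrow> (\<forall>k\<in>K. t k = 0) \<or>
     (\<exists>k1\<in>K. \<exists>k2\<in>K. k1 \<noteq> k2 \<and> t k1 = Max (t ` K) \<and> t k2 = Max (t ` K))"

definition T0_rep :: "nat \<Rightarrow> nat \<Rightarrow> (nat \<Rightarrow> int) set \<Rightarrow> ((nat \<Rightarrow> int) \<Rightarrow> real) \<Rightarrow> bool" where
  "T0_rep n r J \<rho> \<longleftrightarrow>
     (\<forall>\<alpha>\<in>simplex n r. \<rho> \<alpha> \<ge> 0) \<and> {\<alpha>\<in>simplex n r. \<rho> \<alpha> \<noteq> 0} = J \<and>
     (\<forall>s \<alpha> (i::nat \<Rightarrow> nat) (j::nat \<Rightarrow> nat).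
        2 \<le> s \<and> s \<le> r \<and> \<alpha> \<in> simplex n (r - s) \<and> delta_minus J \<le> \<alpha> \<and>
        (\<forall>k\<le>s. i k < n) \<and> (\<forall>k\<in>{2..s}. j k < n) \<and>
        \<alpha> + (\<Sum>k\<le>s. ev (i k)) + (\<Sum>k\<in>{2..s}. ev (j k)) \<le> delta_plus J
      \<longrightarrow> T0_null {..s}
            (\<lambda>k. \<rho> (\<alpha> - ev (i k) + (\<Sum>m\<le>s. ev (i m))) *
                 \<rho> (\<alpha> + ev (i k) + (\<Sum>m\<in>{2..s}. ev (j m)))))"

definition M_convex_fun :: "nat \<Rightarrow> ((nat \<Rightarrow> int) \<Rightarrow> ereal) \<Rightarrow> bool" where
  "M_convex_fun n f \<longleftrightarrow>
     (let D = {\<alpha>\<in>Zn n. f \<alpha> \<noteq> \<infinity>} in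
       D \<noteq> {} \<and>
       (\<forall>\<alpha>\<in>D. \<forall>\<beta>\<in>D. \<forall>k<n. \<alpha> k > \<beta> k \<longrightarrow>
          (\<exists>l<n. \<alpha> l < \<beta> l \<and>
             f \<alpha> + f \<beta> \<ge> f (\<alpha> - ev k + ev l) + f (\<beta> + ev k - ev l))))"

definition neglog_fun :: "nat \<Rightarrow> nat \<Rightarrow> ((nat \<Rightarrow> int) \<Rightarrow> real) \<Rightarrow> (nat \<Rightarrow> int) \<Rightarrow> ereal" where
  "neglog_fun n r \<rho> \<alpha> =
     (if \<alpha> \<in> simplex n r \<and> \<rho> \<alpha> \<noteq> 0 then ereal (- ln (\<rho> \<alpha>)) else \<infinity>)"

end

theory Submission
  imports Defs
begin


lemma ev_apply [simp]: "ev i j = (if j = i then 1 else 0)"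
  by (simp add: ev_def)

lemma sum_fun_apply: "finite K \<Longrightarrow> (\<Sum>k\<in>K. F k) (x::'b) = (\<Sum>k\<in>K. (F k x :: 'c::comm_monoid_add))"
  by (induction K rule: finite_induct) auto

lemma sum_ev_count: "finite K \<Longrightarrow> (\<Sum>k\<in>K. ev (i k)) c = int (card {k\<in>K. i k = c})"
proof -
  assume f: "finite K"
  have "(\<Sum>k\<in>K. ev (i k)) c = (\<Sum>k\<in>K. (if i k = c then 1 else 0::int))"
    using f by (auto simp: sum_fun_apply intro: sum.cong)
  also have "\<dots> = int (card {k\<in>K. i k = c})"
    using f by (simp add: sum.If_cases Int_def conj_commute)
  finally show ?thesis .
qed

lemma finite_simplex: "finite (simplex n r)"
proof -
  have "simplex n r \<subseteq> {f. \<forall>x. (x \<in> {..<n} \<longrightarrow> f x \<in> {0..int r}) \<and> (x \<notin> {..<n} \<longrightarrow> f x = 0)}"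
  proof
    fix f assume f: "f \<in> simplex n r"
    have "f x \<le> int r" if "x < n" for x
    proof -
      have "f x = (\<Sum>i\<in>{x}. f i)" by simp
      also have "\<dots> \<le> (\<Sum>i<n. f i)"
        by (rule sum_mono2) (use f that in \<open>auto simp: simplex_def\<close>)
      finally show ?thesis using f by (simp add: simplex_def)
    qed
    then show "f \<in> {f. \<forall>x. (x \<in> {..<n} \<longrightarrow> f x \<in> {0..int r}) \<and> (x \<notin> {..<n} \<longrightarrow> f x = 0)}"
      using f by (auto simp: simplex_def)
  qed
  moreover have "finite {f. \<forall>x. (x \<in> {..<n} \<longrightarrow> f x \<in> {0..int r}) \<and> (x \<notin> {..<n} \<longrightarrow> f x = (0::int))}"
    by (rule finite_set_of_finite_funs) auto
  ultimately show ?thesis by (rule finite_subset)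
qed

lemma simplex_move:
  assumes "x \<in> simplex n r" "x u \<ge> 1" "u < n" "l < n"
  shows "x - ev u + ev l \<in> simplex n r"
proof -
  have "(\<Sum>i<n. (x - ev u + ev l) i) = (\<Sum>i<n. x i) - (\<Sum>i<n. ev u i) + (\<Sum>i<n. ev l i)"
    by (simp add: sum.distrib sum_subtractf)
  also have "(\<Sum>i<n. ev u i) = 1" using assms(3) by (simp add: sum.delta)
  also have "(\<Sum>i<n. ev l i) = 1" using assms(4) by (simp add: sum.delta)
  finally show ?thesis using assms by (auto simp: simplex_def)
qed

lemma simplex_move':
  assumes "x \<in> simplex n r" "x u \<ge> 1" "u < n" "l < n"
  shows "x + ev l - ev u \<in> simplex n r"
  using simplex_move[OF assms] by (simp add: algebra_simps)


definition RX :: "nat \<Rightarrow> ((nat \<Rightarrow> int) \<Rightarrow> real) \<Rightarrow> (nat \<Rightarrow> int) \<Rightarrow> (nat \<Rightarrow> int) \<Rightarrow> nat \<Rightarrow> bool" where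
  "RX n R x y u \<longleftrightarrow> (\<exists>l<n. x l < y l \<and> R x * R y \<le> R (x - ev u + ev l) * R (y + ev u - ev l))"

lemma ereal_ln_iff:
  fixes a b c d :: real
  assumes "a > 0" "b > 0" "c \<ge> 0" "d \<ge> 0"
  shows "(ereal (- ln a) + ereal (- ln b) \<ge>
          (if c \<noteq> 0 then ereal (- ln c) else \<infinity>) + (if d \<noteq> 0 then ereal (- ln d) else \<infinity>))
         \<longleftrightarrow> a * b \<le> c * d"
proof (cases "c \<noteq> 0 \<and> d \<noteq> 0")
  case True
  then have cd: "c > 0" "d > 0" using assms by auto
  have "(ereal (- ln a) + ereal (- ln b) \<ge> ereal (- ln c) + ereal (- ln d)) \<longleftrightarrow> ln (a * b) \<le> ln (c * d)"
  proof -
    have "(ereal (- ln a) + ereal (- ln b) \<ge> ereal (- ln c) + ereal (- ln d)) \<longleftrightarrow> (- ln a) + (- ln b) \<ge> (- ln c) + (- ln d)"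
      by (metis ereal_less_eq(3) plus_ereal.simps(1))
    also have "\<dots> \<longleftrightarrow> ln a + ln b \<le> ln c + ln d" by (smt (verit))
    finally show ?thesis using assms cd by (simp add: ln_mult)
  qed
  also have "\<dots> \<longleftrightarrow> a * b \<le> c * d" using assms cd by simp
  finally show ?thesis using True by simp
next
  case False
  then have "c * d = 0" by auto
  moreover have "a * b > 0" using assms by simp
  ultimately show ?thesis using False by auto
qed


lemma Zn_simplex: "simplex n r \<subseteq> Zn n"
  by (auto simp: simplex_def Zn_def)

lemma mconv_iff_RX:
  assumes J: "J \<subseteq> simplex n r" "J \<noteq> {}"
    and pos: "\<forall>\<alpha>\<in>simplex n r. \<rho> \<alpha> \<ge> 0"
    and supp: "{\<alpha>\<in>simplex n r. \<rho> \<alpha> \<noteq> 0} = J"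
    and R: "R = (\<lambda>z. if z \<in> simplex n r then \<rho> z else 0)"
  shows "M_convex_fun n (neglog_fun n r \<rho>) \<longleftrightarrow>
         (\<forall>x\<in>J. \<forall>y\<in>J. \<forall>u<n. y u < x u \<longrightarrow> RX n R x y u)"
proof -
  let ?f = "neglog_fun n r \<rho>"
  have D: "{\<alpha>\<in>Zn n. ?f \<alpha> \<noteq> \<infinity>} = J"
    using supp Zn_simplex[of n r] by (auto simp: neglog_fun_def)
  have fR: "?f z = (if R z \<noteq> 0 then ereal (- ln (R z)) else \<infinity>)" if "z \<in> simplex n r" for z
    using that by (simp add: neglog_fun_def R)
  have key: "(?f x + ?f y \<ge> ?f (x - ev u + ev l) + ?f (y + ev u - ev l)) \<longleftrightarrow>
      R x * R y \<le> R (x - ev u + ev l) * R (y + ev u - ev l)"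
    if xy: "x \<in> J" "y \<in> J" "u < n" "y u < x u" "l < n" "x l < y l" for x y u l
  proof -
    have xs: "x \<in> simplex n r" "y \<in> simplex n r" using xy J by auto
    have x0: "x u \<ge> 1" using xy xs by (auto simp: simplex_def) (smt (verit))
    have y0: "y l \<ge> 1" using xy xs by (auto simp: simplex_def) (smt (verit))
    have s1: "x - ev u + ev l \<in> simplex n r" by (rule simplex_move[OF xs(1) x0 xy(3) xy(5)])
    have s2: "y + ev u - ev l \<in> simplex n r" by (rule simplex_move'[OF xs(2) y0 xy(5) xy(3)])
    have px: "R x > 0" "R y > 0" using xy xs supp pos R by auto
    have nn: "R (x - ev u + ev l) \<ge> 0" "R (y + ev u - ev l) \<ge> 0" using pos R by auto
    show ?thesis
      unfolding fR[OF xs(1)] fR[OF xs(2)] fR[OF s1] fR[OF s2]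
      using ereal_ln_iff[OF px nn] px by simp
  qed
  show ?thesis
    unfolding M_convex_fun_def Let_def D RX_def
    using J(2) key by (auto; metis)
qed


definition mv :: "nat \<Rightarrow> (nat \<Rightarrow> int) \<Rightarrow> nat \<Rightarrow> bool" where
  "mv n \<beta> s \<longleftrightarrow> (\<forall>c. \<beta> c \<ge> 0) \<and> (\<forall>c\<ge>n. \<beta> c = 0) \<and> (\<Sum>c<n. \<beta> c) = int s"

lemma mv_sum:
  assumes "finite K" "\<forall>m\<in>K. g m < n"
  shows "mv n (\<Sum>m\<in>K. ev (g m)) (card K)"
proof -
  have nn: "(\<Sum>m\<in>K. ev (g m)) c \<ge> 0" for c
    using assms by (simp add: sum_fun_apply sum_nonneg)
  have z: "(\<Sum>m\<in>K. ev (g m)) c = 0" if "c \<ge> n" for c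
    using assms that by (auto simp: sum_fun_apply intro!: sum.neutral)
  have "(\<Sum>c<n. (\<Sum>m\<in>K. ev (g m)) c) = (\<Sum>c<n. \<Sum>m\<in>K. ev (g m) c)"
    using assms by (simp add: sum_fun_apply)
  also have "\<dots> = (\<Sum>m\<in>K. \<Sum>c<n. ev (g m) c)" by (rule sum.swap)
  also have "\<dots> = (\<Sum>m\<in>K. 1)"
    using assms by (intro sum.cong) (auto simp: sum.delta)
  also have "\<dots> = int (card K)" by simp
  finally show ?thesis using nn z by (simp add: mv_def)
qed

lemma mv_ev: "i < n \<Longrightarrow> mv n (ev i) 1"
  by (auto simp: mv_def sum.delta)

lemma mv_add: "mv n \<beta> a \<Longrightarrow> mv n \<gamma> b \<Longrightarrow> mv n (\<beta> + \<gamma>) (a + b)"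
  by (auto simp: mv_def sum.distrib)

lemma mv_simplex:
  assumes "\<alpha> \<in> simplex n (r - s)" "s \<le> r" "mv n \<beta> s"
  shows "\<alpha> + \<beta> \<in> simplex n r"
  using assms by (auto simp: mv_def simplex_def sum.distrib of_nat_diff)


lemma dirA:
  assumes J: "J \<subseteq> simplex n r"
    and pos: "\<forall>\<alpha>\<in>simplex n r. \<rho> \<alpha> \<ge> 0"
    and supp: "{\<alpha>\<in>simplex n r. \<rho> \<alpha> \<noteq> 0} = J"
    and R: "R = (\<lambda>z. if z \<in> simplex n r then \<rho> z else 0)"
    and RXall: "\<forall>x\<in>J. \<forall>y\<in>J. \<forall>u<n. y u < x u \<longrightarrow> RX n R x y u"
  shows "T0_rep n r J \<rho>"
  unfolding T0_rep_def
proof (intro conjI allI impI)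
  show "\<forall>\<alpha>\<in>simplex n r. 0 \<le> \<rho> \<alpha>" by (rule pos)
  show "{\<alpha> \<in> simplex n r. \<rho> \<alpha> \<noteq> 0} = J" by (rule supp)
  fix s \<alpha> and i j :: "nat \<Rightarrow> nat"
  assume h: "2 \<le> s \<and> s \<le> r \<and> \<alpha> \<in> simplex n (r - s) \<and> delta_minus J \<le> \<alpha> \<and>
        (\<forall>k\<le>s. i k < n) \<and> (\<forall>k\<in>{2..s}. j k < n) \<and>
        \<alpha> + (\<Sum>k\<le>s. ev (i k)) + (\<Sum>k\<in>{2..s}. ev (j k)) \<le> delta_plus J"
  define SI where "SI = (\<Sum>m\<le>s. ev (i m))"
  define SJ where "SJ = (\<Sum>m\<in>{2..s}. ev (j m))"
  define A where "A k = \<alpha> - ev (i k) + SI" for k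
  define B where "B k = \<alpha> + ev (i k) + SJ" for k
  define t where "t k = \<rho> (A k) * \<rho> (B k)" for k
  have s2: "2 \<le> s" "s \<le> r" and \<alpha>s: "\<alpha> \<in> simplex n (r - s)" and iN: "\<forall>k\<le>s. i k < n"
    and jN: "\<forall>k\<in>{2..s}. j k < n" using h by auto
  have SIc: "SI c = int (card {m\<in>{..s}. i m = c})" for c
    unfolding SI_def by (rule sum_ev_count) simp
  have SJnn: "SJ c \<ge> 0" for c
    unfolding SJ_def by (simp add: sum_fun_apply sum_nonneg)
  have Asimp: "A k \<in> simplex n r" if "k \<le> s" for k
  proof -
    have "SI = ev (i k) + (\<Sum>m\<in>{..s}-{k}. ev (i m))"
      unfolding SI_def using that by (simp add: sum.remove)
    then have "A k = \<alpha> + (\<Sum>m\<in>{..s}-{k}. ev (i m))" unfolding A_def by (simp add: algebra_simps)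
    moreover have "mv n (\<Sum>m\<in>{..s}-{k}. ev (i m)) s"
      using mv_sum[of "{..s}-{k}" i n] iN that by simp
    ultimately show ?thesis using mv_simplex[OF \<alpha>s s2(2)] by simp
  qed
  have Bsimp: "B k \<in> simplex n r" if "k \<le> s" for k
  proof -
    have "mv n SJ (s - 1)"
      using mv_sum[of "{2..s}" j n] jN unfolding SJ_def by simp
    then have "mv n (ev (i k) + SJ) (1 + (s - 1))"
      using mv_add mv_ev iN that by blast
    moreover have "1 + (s - 1) = s" using s2 by simp
    ultimately show ?thesis unfolding B_def using mv_simplex[OF \<alpha>s s2(2)]
      by (metis add.assoc)
  qed
  have tnn: "t k \<ge> 0" if "k \<le> s" for k
    unfolding t_def using pos Asimp[OF that] Bsimp[OF that] by simp
  show "T0_null {..s} (\<lambda>k. \<rho> (\<alpha> - ev (i k) + (\<Sum>m\<le>s. ev (i m))) * \<rho> (\<alpha> + ev (i k) + (\<Sum>m\<in>{2..s}. ev (j m))))"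
  proof (rule ccontr)
    assume nn: "\<not> ?thesis"
    have tt: "(\<lambda>k. \<rho> (\<alpha> - ev (i k) + (\<Sum>m\<le>s. ev (i m))) * \<rho> (\<alpha> + ev (i k) + (\<Sum>m\<in>{2..s}. ev (j m)))) = t"
      by (simp add: t_def A_def B_def SI_def SJ_def fun_eq_iff)
    define M where "M = Max (t ` {..s})"
    from nn have nz: "\<exists>k\<le>s. t k \<noteq> 0" and uniq: "\<And>k1 k2. k1 \<le> s \<Longrightarrow> k2 \<le> s \<Longrightarrow> k1 \<noteq> k2 \<Longrightarrow> t k1 = M \<Longrightarrow> t k2 = M \<Longrightarrow> False"
      unfolding tt T0_null_def M_def by auto
    have Mge: "t k \<le> M" if "k \<le> s" for k unfolding M_def using that by simp
    have "M \<in> t ` {..s}" unfolding M_def by (rule Max_in) auto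
    then obtain k0 where k0: "k0 \<le> s" "t k0 = M" by auto
    obtain k' where k': "k' \<le> s" "t k' \<noteq> 0" using nz by auto
    have Mpos: "M > 0" using Mge[OF k'(1)] tnn[OF k'(1)] k'(2) by simp
    have Ak0: "\<rho> (A k0) > 0" and Bk0: "\<rho> (B k0) > 0"
    proof -
      have "\<rho> (A k0) \<ge> 0" "\<rho> (B k0) \<ge> 0" using pos Asimp[OF k0(1)] Bsimp[OF k0(1)] by auto
      moreover have "\<rho> (A k0) * \<rho> (B k0) > 0" using Mpos k0 by (simp add: t_def)
      ultimately show "\<rho> (A k0) > 0" "\<rho> (B k0) > 0"
        by (auto simp: zero_less_mult_iff)
    qed
    have aJ: "A k0 \<in> J" and bJ: "B k0 \<in> J"
      using Ak0 Bk0 Asimp[OF k0(1)] Bsimp[OF k0(1)] supp by auto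
    define c where "c = i k0"
    have cn: "c < n" using iN k0 c_def by auto
    have uniqc: "{m\<in>{..s}. i m = c} = {k0}"
    proof (rule ccontr)
      assume "{m\<in>{..s}. i m = c} \<noteq> {k0}"
      then obtain k1 where k1: "k1 \<le> s" "i k1 = c" "k1 \<noteq> k0" using k0 c_def by auto
      have "t k1 = t k0" unfolding t_def A_def B_def using k1 c_def by simp
      then show False using uniq[OF k1(1) k0(1) k1(3)] k0 by simp
    qed
    have SIc1: "SI c = 1" using SIc[of c] uniqc by simp
    have ac: "A k0 c < B k0 c"
      using SIc1 SJnn[of c] by (simp add: A_def B_def c_def[symmetric])
    obtain l where l: "l < n" "B k0 l < A k0 l"
      and ineq: "R (B k0) * R (A k0) \<le> R (B k0 - ev c + ev l) * R (A k0 + ev c - ev l)"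
      using RXall aJ bJ cn ac unfolding RX_def by blast
    have lc: "l \<noteq> c"
      using l(2) SIc1 SJnn[of c] by (auto simp: A_def B_def c_def[symmetric])
    have "SI l > 0"
      using l(2) SJnn[of l] lc by (simp add: A_def B_def c_def[symmetric])
    then have "card {m\<in>{..s}. i m = l} \<noteq> 0" using SIc[of l] by (metis of_nat_0 order_less_irrefl)
    then have "{m\<in>{..s}. i m = l} \<noteq> {}" by (metis card.empty)
    then obtain k1 where k1: "k1 \<le> s" "i k1 = l" by auto
    have k10: "k1 \<noteq> k0" using k1 lc c_def by auto
    have e1: "B k0 - ev c + ev l = B k1" unfolding B_def c_def using k1 by (simp add: algebra_simps)
    have e2: "A k0 + ev c - ev l = A k1" unfolding A_def c_def using k1 by (simp add: algebra_simps)
    have "t k0 \<le> t k1"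
      using ineq unfolding e1 e2 R using Asimp[OF k0(1)] Bsimp[OF k0(1)] Asimp[OF k1(1)] Bsimp[OF k1(1)]
      by (simp add: t_def mult.commute)
    then have "t k1 = M" using Mge[OF k1(1)] k0 by simp
    then show False using uniq[OF k1(1) k0(1) k10] k0 by simp
  qed
qed



definition pdist :: "nat \<Rightarrow> (nat \<Rightarrow> int) \<Rightarrow> (nat \<Rightarrow> int) \<Rightarrow> nat" where
  "pdist n x y = (\<Sum>i<n. nat (x i - y i))"

lemma pdist_less:
  assumes "\<forall>i<n. nat (x' i - y' i) \<le> nat (x i - y i)" "k < n" "nat (x' k - y' k) < nat (x k - y k)"
  shows "pdist n x' y' < pdist n x y"
  unfolding pdist_def
  by (rule sum_strict_mono_ex1) (use assms in auto)

lemma pdist_le2: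
  assumes "\<forall>i<n. nat (x i - y i) \<le> (if i = a then 1 else 0) + (if i = b then 1 else 0)" "a < n" "b < n"
  shows "pdist n x y \<le> 2"
proof -
  have "pdist n x y \<le> (\<Sum>i<n. (if i = a then 1 else 0) + (if i = b then 1 else (0::nat)))"
    unfolding pdist_def by (rule sum_mono) (use assms in auto)
  also have "\<dots> = 2" using assms by (simp add: sum.distrib sum.delta)
  finally show ?thesis .
qed

lemma pdist0_eq:
  assumes "x \<in> simplex n r" "y \<in> simplex n r" "pdist n x y = 0"
  shows "x = y"
proof -
  have le: "x i \<le> y i" if "i < n" for i
    using assms(3) that unfolding pdist_def by simp
  have "(\<Sum>i<n. y i - x i) = 0"
    using assms(1,2) by (simp add: simplex_def sum_subtractf)
  then have "\<forall>i\<in>{..<n}. y i - x i = 0"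
    by (subst sum_nonneg_eq_0_iff[symmetric]) (use le in auto)
  then have "x i = y i" for i
    using assms(1,2) by (cases "i < n") (auto simp: simplex_def)
  then show ?thesis by auto
qed

lemma simplex_neq_ex:
  assumes "x \<in> simplex n r" "y \<in> simplex n r" "x \<noteq> y"
  shows "\<exists>w<n. y w < x w"
proof (rule ccontr)
  assume "\<not> ?thesis"
  then have "pdist n x y = 0" unfolding pdist_def by (auto intro!: sum.neutral)
  then show False using pdist0_eq assms by blast
qed

lemma pos_prod:
  fixes a b :: real
  assumes "a \<ge> 0" "b \<ge> 0" "a * b > 0" shows "a > 0" "b > 0"
  using assms by (auto simp: zero_less_mult_iff)


lemma exch_all:
  assumes nn: "\<And>z. R z \<ge> 0"
    and Rpos: "\<And>z. R z > 0 \<longleftrightarrow> z \<in> J"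
    and Jsub: "J \<subseteq> simplex n r"
    and MC: "M_convex_set n J"
    and LE: "\<And>x y u. x \<in> J \<Longrightarrow> y \<in> J \<Longrightarrow> u < n \<Longrightarrow> y u < x u \<Longrightarrow> pdist n x y \<le> 2 \<Longrightarrow> RX n R x y u"
  shows "x \<in> J \<Longrightarrow> y \<in> J \<Longrightarrow> u < n \<Longrightarrow> y u < x u \<Longrightarrow> RX n R x y u"
proof (induction "pdist n x y" arbitrary: x y u rule: less_induct)
  case less
  note xJ = less.prems(1) and yJ = less.prems(2) and un = less.prems(3) and xu = less.prems(4)
  have mc: "\<And>\<alpha> \<beta> i. \<alpha> \<in> J \<Longrightarrow> \<beta> \<in> J \<Longrightarrow> i < n \<Longrightarrow> \<alpha> i < \<beta> i \<Longrightarrow>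
        \<exists>j<n. \<alpha> j > \<beta> j \<and> \<alpha> + ev i - ev j \<in> J \<and> \<beta> - ev i + ev j \<in> J"
    using MC unfolding M_convex_set_def by blast
  show ?case
  proof (cases "pdist n x y \<le> 2")
    case True
    then show ?thesis using LE xJ yJ un xu by blast
  next
    case False
    show ?thesis
    proof (cases "\<exists>w<n. w \<noteq> u \<and> y w < x w")
      case True
      then obtain w where w: "w < n" "w \<noteq> u" "y w < x w" by blast
      define T where "T = {t. t < n \<and> x t < y t \<and> x - ev w + ev t \<in> J}"
      define \<phi> where "\<phi> t = R (x - ev u + ev t) / R (x - ev w + ev t)" for t
      have Tfin: "finite T" unfolding T_def by simp
      have Tne: "T \<noteq> {}"
        using mc[OF yJ xJ w(1) w(3)] unfolding T_def by auto
      have "Min (\<phi> ` T) \<in> \<phi> ` T" using Tfin Tne by simp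
      then obtain t where tT: "t \<in> T" and tdef: "\<phi> t = Min (\<phi> ` T)" by auto
      have tmin: "\<phi> t \<le> \<phi> t'" if "t' \<in> T" for t'
        unfolding tdef using Tfin that by simp
      have tn: "t < n" and xt: "x t < y t" and x'J: "x - ev w + ev t \<in> J" using tT T_def by auto
      define x' where "x' = x - ev w + ev t"
      have tu: "t \<noteq> u" "t \<noteq> w" using xt xu w by auto
      have "pdist n x' y < pdist n x y"
        by (rule pdist_less[where k = w]) (use w xt tu in \<open>auto simp: x'_def\<close>)
      moreover have "y u < x' u" using xu tu w by (simp add: x'_def)
      ultimately have "RX n R x' y u" using less.hyps x'J yJ un by (simp add: x'_def)
      then obtain v where vn: "v < n" and xv': "x' v < y v"
        and ih: "R x' * R y \<le> R (x' - ev u + ev v) * R (y + ev u - ev v)"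
        unfolding RX_def by blast
      have vw: "v \<noteq> w" using xv' w tu by (auto simp: x'_def)
      have xv: "x v < y v" using xv' vw tu by (auto simp: x'_def split: if_splits)
      have vu: "v \<noteq> u" using xv xu by auto
      define z where "z = x' - ev u + ev v"
      have Rx': "R x' > 0" using Rpos x'J by (simp add: x'_def)
      have Ry: "R y > 0" "R x > 0" using Rpos yJ xJ by auto
      have "R z * R (y + ev u - ev v) > 0"
        using ih Rx' Ry unfolding z_def by (smt (verit) mult_pos_pos)
      then have Rz: "R z > 0" using pos_prod nn by blast
      then have zJ: "z \<in> J" using Rpos by simp
      have "pdist n x z \<le> 2"
        by (rule pdist_le2[where a = w and b = u]) (use w un tu vw vu in \<open>auto simp: z_def x'_def\<close>)
      moreover have "z u < x u" using tu vu w by (simp add: z_def x'_def)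
      ultimately have "RX n R x z u" using LE xJ zJ un by blast
      then obtain l where ln: "l < n" and xl: "x l < z l"
        and le: "R x * R z \<le> R (x - ev u + ev l) * R (z + ev u - ev l)"
        unfolding RX_def by blast
      have ltv: "l = t \<or> l = v"
        using xl by (auto simp: z_def x'_def split: if_splits)
      have claim: "R x * R z \<le> R (x - ev u + ev v) * R x'"
      proof (cases "l = v")
        case True
        have "z + ev u - ev l = x'" unfolding z_def True by (simp add: algebra_simps)
        then show ?thesis using le True by (simp add: mult.commute)
      next
        case False
        then have lt: "l = t" using ltv by simp
        have e: "z + ev u - ev l = x - ev w + ev v" unfolding z_def x'_def lt by (simp add: algebra_simps)
        have le2: "R x * R z \<le> R (x - ev u + ev t) * R (x - ev w + ev v)" using le e lt by simp
        have "R x * R z > 0" using Ry Rz by simp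
        then have "R (x - ev w + ev v) > 0" using le2 nn pos_prod
          by (smt (verit, best))
        then have vT: "v \<in> T" using Rpos vn xv unfolding T_def by simp
        have "\<phi> t \<le> \<phi> v" by (rule tmin[OF vT])
        then have "R (x - ev u + ev t) * R (x - ev w + ev v) \<le> R (x - ev u + ev v) * R x'"
          unfolding \<phi>_def x'_def using Rx' \<open>R (x - ev w + ev v) > 0\<close>
          by (simp add: divide_le_eq le_divide_eq x'_def mult.commute mult.left_commute)
        then show ?thesis using le2 by simp
      qed
      have "(R x' * R y) * (R x * R z) \<le> (R z * R (y + ev u - ev v)) * (R (x - ev u + ev v) * R x')"
        by (rule mult_mono) (use ih claim nn in \<open>auto simp: z_def\<close>)
      then have "(R x' * R z) * (R x * R y) \<le> (R x' * R z) * (R (x - ev u + ev v) * R (y + ev u - ev v))"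
        by (simp add: algebra_simps)
      then have "R x * R y \<le> R (x - ev u + ev v) * R (y + ev u - ev v)"
        using Rx' Rz by (simp add: mult_le_cancel_left_pos)
      then show ?thesis unfolding RX_def using vn xv by blast
    next
      case False
      then have onlyu: "\<And>w. w < n \<Longrightarrow> w \<noteq> u \<Longrightarrow> x w \<le> y w" by auto
      have "pdist n x y = (\<Sum>i<n. if i = u then nat (x u - y u) else 0)"
        unfolding pdist_def by (rule sum.cong) (use onlyu in auto)
      also have "\<dots> = nat (x u - y u)" using un by (simp add: sum.delta)
      finally have big: "x u - y u \<ge> 3" using \<open>\<not> pdist n x y \<le> 2\<close> by simp
      obtain v0 where v0: "v0 < n" "x v0 < y v0" "y + ev u - ev v0 \<in> J"
        using mc[OF yJ xJ un xu] by blast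
      have v0u: "v0 \<noteq> u" using v0 xu by auto
      define y' where "y' = y + ev u - ev v0"
      have y'J: "y' \<in> J" using v0 y'_def by simp
      have "pdist n x y' < pdist n x y"
        by (rule pdist_less[where k = u]) (use un v0 v0u xu in \<open>auto simp: y'_def\<close>)
      moreover have "y' u < x u" using big v0u by (simp add: y'_def)
      ultimately have "RX n R x y' u" using less.hyps xJ y'J un by (simp add: y'_def)
      then obtain v where vn: "v < n" and xv': "x v < y' v"
        and ih: "R x * R y' \<le> R (x - ev u + ev v) * R (y' + ev u - ev v)"
        unfolding RX_def by blast
      have vu: "v \<noteq> u" using xv' big v0u by (auto simp: y'_def)
      have xv: "x v < y v" using xv' vu by (auto simp: y'_def split: if_splits)
      define z where "z = y' + ev u - ev v"
      have Ry': "R y' > 0" using Rpos y'J by simp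
      have Ry: "R y > 0" "R x > 0" using Rpos yJ xJ by auto
      have "R (x - ev u + ev v) * R z > 0"
        using ih Ry' Ry unfolding z_def by (smt (verit) mult_pos_pos)
      then have Rz: "R z > 0" using pos_prod nn by blast
      then have zJ: "z \<in> J" using Rpos by simp
      have "pdist n z y \<le> 2"
        by (rule pdist_le2[where a = u and b = u]) (use un v0u vu in \<open>auto simp: z_def y'_def\<close>)
      moreover have "y u < z u" using v0u vu by (simp add: z_def y'_def)
      ultimately have "RX n R z y u" using LE yJ zJ un by blast
      then obtain l where ln: "l < n" and zl: "z l < y l"
        and le: "R z * R y \<le> R (z - ev u + ev l) * R (y + ev u - ev l)"
        unfolding RX_def by blast
      have ltv: "l = v0 \<or> l = v"
        using zl by (auto simp: z_def y'_def split: if_splits)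
      have claim: "R z * R y \<le> R (y + ev u - ev v) * R y'"
      proof (cases "l = v")
        case True
        have "z - ev u + ev l = y'" unfolding z_def True by (simp add: algebra_simps)
        then show ?thesis using le True by (simp add: mult.commute)
      next
        case False
        then have lt: "l = v0" using ltv by simp
        have e: "z - ev u + ev l = y + ev u - ev v" unfolding z_def y'_def lt by (simp add: algebra_simps)
        have "R z * R y \<le> R (y + ev u - ev v) * R (y + ev u - ev v0)"
          using le unfolding lt using e lt by metis
        then show ?thesis by (simp add: y'_def)
      qed
      have "(R x * R y') * (R z * R y) \<le> (R (x - ev u + ev v) * R z) * (R (y + ev u - ev v) * R y')"
        by (rule mult_mono) (use ih claim nn in \<open>auto simp: z_def\<close>)
      then have "(R y' * R z) * (R x * R y) \<le> (R y' * R z) * (R (x - ev u + ev v) * R (y + ev u - ev v))"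
        by (simp add: algebra_simps)
      then have "R x * R y \<le> R (x - ev u + ev v) * R (y + ev u - ev v)"
        using Ry' Rz by (simp add: mult_le_cancel_left_pos)
      then show ?thesis unfolding RX_def using vn xv by blast
    qed
  qed
qed



lemma sum3: "(\<Sum>k\<le>(2::nat). F k) = F 0 + F 1 + F 2"
  by (simp add: numeral_2_eq_2 atMost_Suc add.commute add.left_commute)

lemma T0_null3:
  assumes "T0_null {..2::nat} t" "t 0 > 0"
  shows "t 0 \<le> t 1 \<or> t 0 \<le> t 2"
proof -
  have M: "t 0 \<le> Max (t ` {..2})" by simp
  from assms(1) consider "\<forall>k\<in>{..2}. t k = 0"
    | k1 k2 where "k1 \<le> 2" "k2 \<le> 2" "k1 \<noteq> k2" "t k1 = Max (t ` {..2})" "t k2 = Max (t ` {..2})"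
    unfolding T0_null_def by auto
  then show ?thesis
  proof cases
    case 1 then show ?thesis using assms(2) by auto
  next
    case 2
    then obtain k where "k \<in> {1,2}" "t k = Max (t ` {..2})" by (metis atMost_iff insertCI le_Suc_eq numeral_2_eq_2 le_zero_eq One_nat_def)
    then show ?thesis using M by auto
  qed
qed

lemma LE_from_T0:
  assumes Jsub: "J \<subseteq> simplex n r"
    and MC: "M_convex_set n J"
    and pos: "\<forall>\<alpha>\<in>simplex n r. \<rho> \<alpha> \<ge> 0"
    and supp: "{\<alpha>\<in>simplex n r. \<rho> \<alpha> \<noteq> 0} = J"
    and R: "R = (\<lambda>z. if z \<in> simplex n r then \<rho> z else 0)"
    and T0: "T0_rep n r J \<rho>"
    and xJ: "x \<in> J" and yJ: "y \<in> J" and un: "u < n" and xu: "y u < x u" and d2: "pdist n x y \<le> 2"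
  shows "RX n R x y u"
proof -
  have mc: "\<And>\<alpha> \<beta> i. \<alpha> \<in> J \<Longrightarrow> \<beta> \<in> J \<Longrightarrow> i < n \<Longrightarrow> \<alpha> i < \<beta> i \<Longrightarrow>
        \<exists>j<n. \<alpha> j > \<beta> j \<and> \<alpha> + ev i - ev j \<in> J \<and> \<beta> - ev i + ev j \<in> J"
    using MC unfolding M_convex_set_def by blast
  have xs: "x \<in> simplex n r" and ys: "y \<in> simplex n r" using xJ yJ Jsub by auto
  have Rs: "R z = \<rho> z" if "z \<in> simplex n r" for z using that R by simp
  obtain a where an: "a < n" and ya: "x a < y a" and x1J: "x - ev u + ev a \<in> J"
    using mc[OF yJ xJ un xu] by blast
  define x1 where "x1 = x - ev u + ev a"
  have au: "a \<noteq> u" using ya xu by auto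
  show ?thesis
  proof (cases "x1 = y")
    case True
    have "y + ev u - ev a = x" using True unfolding x1_def by (simp add: algebra_simps)
    then have "R x * R y \<le> R (x - ev u + ev a) * R (y + ev u - ev a)"
      using True by (simp add: x1_def mult.commute)
    then show ?thesis unfolding RX_def using an ya by blast
  next
    case False
    have x1s: "x1 \<in> simplex n r" using x1J Jsub x1_def by auto
    obtain w where wn: "w < n" and yw: "y w < x1 w" using simplex_neq_ex[OF x1s ys False] by blast
    have x1J': "x1 \<in> J" using x1J x1_def by simp
    obtain b where bn: "b < n" and yb: "x1 b < y b" and x2J: "x1 - ev w + ev b \<in> J"
      using mc[OF yJ x1J' wn yw] by blast
    have wa: "w \<noteq> a" using yw ya au by (auto simp: x1_def)
    have bu: "b \<noteq> u" using yb xu au by (auto simp: x1_def)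
    have bw: "b \<noteq> w" using yb yw by auto
    have xb: "x b < y b" using yb bu by (auto simp: x1_def split: if_splits)
    have "pdist n x1 y < pdist n x y"
      by (rule pdist_less[where k = u]) (use un au ya xu in \<open>auto simp: x1_def\<close>)
    moreover have "pdist n (x1 - ev w + ev b) y < pdist n x1 y"
      by (rule pdist_less[where k = w]) (use wn bw yw yb in \<open>auto\<close>)
    ultimately have "pdist n (x1 - ev w + ev b) y = 0" using d2 by linarith
    then have yeq: "y = x - ev u + ev a - ev w + ev b"
      using pdist0_eq[of "x1 - ev w + ev b" n r y] x2J Jsub ys by (auto simp: x1_def)
    define \<alpha> where "\<alpha> = x - ev u - ev w"
    define i where "i = (\<lambda>k::nat. if k = 0 then u else if k = 1 then a else b)"
    define j where "j = (\<lambda>k::nat. w)"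
    have SI: "(\<Sum>k\<le>2. ev (i k)) = ev u + ev a + ev b" by (simp add: sum3 i_def)
    have SJ: "(\<Sum>k\<in>{2..2::nat}. ev (j k)) = ev w" by (simp add: j_def)
    have \<alpha>c: "\<alpha> c = (if c = a \<or> c = b then x c else y c)" for c
      using wa bu bw au by (auto simp: \<alpha>_def yeq)
    have \<alpha>nn: "\<alpha> c \<ge> 0" for c using xs ys \<alpha>c[of c] by (auto simp: simplex_def)
    have \<alpha>0: "\<alpha> c = 0" if "c \<ge> n" for c using xs that un wn by (auto simp: simplex_def \<alpha>_def)
    have "(\<Sum>c<n. \<alpha> c) = (\<Sum>c<n. x c) - (\<Sum>c<n. ev u c) - (\<Sum>c<n. ev w c)"
      by (simp add: \<alpha>_def sum_subtractf)
    also have "\<dots> = int r - 2" using xs un wn by (simp add: simplex_def sum.delta)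
    finally have \<alpha>sum: "(\<Sum>c<n. \<alpha> c) = int r - 2" .
    have r2: "r \<ge> 2"
    proof -
      have "(\<Sum>c<n. \<alpha> c) \<ge> 0" using \<alpha>nn by (simp add: sum_nonneg)
      then show ?thesis using \<alpha>sum by simp
    qed
    have \<alpha>s: "\<alpha> \<in> simplex n (r - 2)"
      using \<alpha>nn \<alpha>0 \<alpha>sum r2 by (simp add: simplex_def of_nat_diff)
    have finJ: "finite J" using finite_simplex finite_subset Jsub by blast
    have dm: "delta_minus J \<le> \<alpha>"
      unfolding le_fun_def delta_minus_def
    proof
      fix c
      show "Min ((\<lambda>\<alpha>. \<alpha> c) ` J) \<le> \<alpha> c"
        using \<alpha>c[of c] finJ xJ yJ by (auto intro: Min_le)
    qed
    have dp: "\<alpha> + (\<Sum>k\<le>2. ev (i k)) + (\<Sum>k\<in>{2..2}. ev (j k)) \<le> delta_plus J"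
      unfolding le_fun_def delta_plus_def SI SJ
    proof
      fix c
      have "(\<alpha> + (ev u + ev a + ev b) + ev w) c = (if c = a \<or> c = b then y c else x c)"
        using wa bu bw au by (auto simp: \<alpha>_def yeq)
      then show "(\<alpha> + (ev u + ev a + ev b) + ev w) c \<le> Max ((\<lambda>\<alpha>. \<alpha> c) ` J)"
        using finJ xJ yJ by (auto intro: Max_ge)
    qed
    have "T0_null {..2} (\<lambda>k. \<rho> (\<alpha> - ev (i k) + (\<Sum>m\<le>2. ev (i m))) * \<rho> (\<alpha> + ev (i k) + (\<Sum>m\<in>{2..2}. ev (j m))))"
      using T0 unfolding T0_rep_def
      apply (elim conjE)
      apply (drule spec[where x = 2], drule spec[where x = \<alpha>], drule spec[where x = i], drule spec[where x = j])
      using r2 \<alpha>s dm dp un an bn wn by (auto simp: i_def j_def)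
    then have T: "T0_null {..2} (\<lambda>k. \<rho> (\<alpha> - ev (i k) + (ev u + ev a + ev b)) * \<rho> (\<alpha> + ev (i k) + ev w))"
      unfolding SI SJ .
    have e0: "\<alpha> - ev u + (ev u + ev a + ev b) = y" "\<alpha> + ev u + ev w = x"
      by (simp_all add: \<alpha>_def yeq algebra_simps)
    have e1: "\<alpha> - ev a + (ev u + ev a + ev b) = y + ev u - ev a" "\<alpha> + ev a + ev w = x - ev u + ev a"
      by (simp_all add: \<alpha>_def yeq algebra_simps)
    have e2: "\<alpha> - ev b + (ev u + ev a + ev b) = y + ev u - ev b" "\<alpha> + ev b + ev w = x - ev u + ev b"
      by (simp_all add: \<alpha>_def yeq algebra_simps)
    have pxy: "\<rho> y * \<rho> x > 0"
    proof -
      have "\<rho> x > 0" "\<rho> y > 0" using xJ yJ supp pos by auto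
      then show ?thesis by simp
    qed
    have "\<rho> y * \<rho> x \<le> \<rho> (y + ev u - ev a) * \<rho> (x - ev u + ev a) \<or>
          \<rho> y * \<rho> x \<le> \<rho> (y + ev u - ev b) * \<rho> (x - ev u + ev b)"
      using T0_null3[OF T] pxy au wa bu bw by (simp add: i_def e0 e1 e2)
    moreover have "x u \<ge> 1" "y a \<ge> 1" "y b \<ge> 1" using xu ya xb xs ys by (auto simp: simplex_def) (smt (verit))+
    ultimately have "R x * R y \<le> R (x - ev u + ev a) * R (y + ev u - ev a) \<or>
          R x * R y \<le> R (x - ev u + ev b) * R (y + ev u - ev b)"
      using Rs xs ys simplex_move[OF xs _ un] simplex_move'[OF ys _ _ un] an bn
      by (simp add: mult.commute)
    then show ?thesis unfolding RX_def using an bn ya xb by blast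
  qed
qed


theorem propositionB:
  fixes n r :: nat and J :: "(nat \<Rightarrow> int) set" and \<rho> :: "(nat \<Rightarrow> int) \<Rightarrow> real"
  assumes "J \<subseteq> simplex n r"
    and "M_convex_set n J"
    and "\<forall>\<alpha>\<in>simplex n r. \<rho> \<alpha> \<ge> 0"
    and "{\<alpha>\<in>simplex n r. \<rho> \<alpha> \<noteq> 0} = J"
  shows "T0_rep n r J \<rho> \<longleftrightarrow> M_convex_fun n (neglog_fun n r \<rho>)"
proof -
  define R where "R = (\<lambda>z. if z \<in> simplex n r then \<rho> z else 0)"
  have Jne: "J \<noteq> {}" using assms(2) by (simp add: M_convex_set_def)
  have nn: "R z \<ge> 0" for z using assms(3) by (simp add: R_def)
  have Rpos: "R z > 0 \<longleftrightarrow> z \<in> J" for z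
    using assms(3,4) unfolding R_def by (smt (verit, ccfv_SIG) mem_Collect_eq)
  have iff: "M_convex_fun n (neglog_fun n r \<rho>) \<longleftrightarrow> (\<forall>x\<in>J. \<forall>y\<in>J. \<forall>u<n. y u < x u \<longrightarrow> RX n R x y u)"
    by (rule mconv_iff_RX[OF assms(1) Jne assms(3) assms(4) R_def])
  show ?thesis
  proof
    assume T0: "T0_rep n r J \<rho>"
    have "RX n R x y u" if "x \<in> J" "y \<in> J" "u < n" "y u < x u" for x y u
      by (rule exch_all[OF nn Rpos assms(1) assms(2) LE_from_T0[OF assms R_def T0] that])
    then show "M_convex_fun n (neglog_fun n r \<rho>)" using iff by blast
  next
    assume "M_convex_fun n (neglog_fun n r \<rho>)"
    then show "T0_rep n r J \<rho>" using iff dirA[OF assms(1) assms(3) assms(4) R_def] by blast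
  qed
qed

end
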